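(* Let $T$ be a rooted binary tree with black/white-coloured leaves and the induced node colouring and classification as described in the context. Any SPR operation on $T$ belonging to the class $(\mathrm{B},\mathrm{r},\mathrm{W},\ast)$ or $(\mathrm{B},\mathrm{r},\mathrm{G},\ast)$ does not reduce the number of maximal black subtrees, i.e. the resulting tree has at least as many maximal black subtrees as $T$.
   Context: All trees are rooted binary trees; every non-leaf node has exactly two children and every non-root node $n$ has a parent $\mathrm{pa}(n)$. A "subtree" always means a node together with all of its descendants. Colouring: each leaf is coloured black (B) or white (W); an internal node is black if both children are black, white if both children are white, and grey (G) otherwise. A subtree is black (resp. white) if all its nodes are black (resp. white); it is maximal if no strictly larger subtree containing it is black (resp. white). Classification: a black or white node is of type "r" if it is the root of a maximal subtree of its own colour, and of type "b" otherwise; all grey nodes are of type "b" by convention. SPR operation $(u,v)$ on $T$: $u$ is a non-root node, $v$ is a node with $v\notin\{u,\mathrm{pa}(u)\}$ and $v$ not a descendant of $u$; the subtree rooted at $u$ is pruned (the edge to $u$ is removed and $\mathrm{pa}(u)$ deleted, its other child taking its place), then regrafted by inserting a new node on the edge from $v$ to its parent (or as a new root above $v$ if $v$ is the root) whose two children are $v$ and $u$; colours of the resulting tree are recomputed by the same rule. The operation belongs to class $(x,y,z,w)$ where $x,z\in\{\mathrm{B},\mathrm{W},\mathrm{G}\}$ are the colours in $T$ of $u$ and $v$, and $y,w\in\{\mathrm{r},\mathrm{b}\}$ their classifications in $T$; $\ast$ denotes any value. *)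

theory Defs
  imports Main "HOL-Library.Sublist"
begin

text \<open>Rooted binary trees whose leaves are coloured; Leaf True = black leaf,
Leaf False = white leaf. Nodes are addressed by positions (paths from the root):
False = go to the left child, True = go to the right child.\<close>

datatype tree = Leaf bool | Node tree tree

datatype colour = B | W | G

datatype cls = R | Bc

fun positions :: "tree \<Rightarrow> bool list set" where
  "positions (Leaf c) = {[]}"
| "positions (Node l r) = {[]} \<union> Cons False ` positions l \<union> Cons True ` positions r"

fun sub :: "tree \<Rightarrow> bool list \<Rightarrow> tree" where
  "sub t [] = t"
| "sub (Node l r) (d # p) = sub (if d then r else l) p"
| "sub (Leaf c) (d # p) = Leaf c"

fun replace :: "tree \<Rightarrow> bool list \<Rightarrow> tree \<Rightarrow> tree" where
  "replace t [] s = s"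
| "replace (Node l r) (d # p) s =
     (if d then Node l (replace r p s) else Node (replace l p s) r)"
| "replace (Leaf c) (d # p) s = Leaf c"

fun col :: "tree \<Rightarrow> colour" where
  "col (Leaf c) = (if c then B else W)"
| "col (Node l r) =
     (if col l = B \<and> col r = B then B
      else if col l = W \<and> col r = W then W else G)"

definition node_col :: "tree \<Rightarrow> bool list \<Rightarrow> colour" where
  "node_col t p = col (sub t p)"

definition mono_subtree :: "tree \<Rightarrow> colour \<Rightarrow> bool list \<Rightarrow> bool" where
  "mono_subtree t c p \<longleftrightarrow> p \<in> positions t \<and>
     (\<forall>q. p @ q \<in> positions t \<longrightarrow> node_col t (p @ q) = c)"

definition maximal_subtree :: "tree \<Rightarrow> colour \<Rightarrow> bool list \<Rightarrow> bool" where
  "maximal_subtree t c p \<longleftrightarrow> mono_subtree t c p \<and>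
     \<not> (\<exists>p'. strict_prefix p' p \<and> mono_subtree t c p')"

definition num_max_black :: "tree \<Rightarrow> nat" where
  "num_max_black t = card {p. maximal_subtree t B p}"

definition classify :: "tree \<Rightarrow> bool list \<Rightarrow> cls" where
  "classify t p = (if node_col t p \<noteq> G \<and> maximal_subtree t (node_col t p) p then R else Bc)"

text \<open>pruning the subtree at u (u non-root): pa(u) is replaced by the sibling of u\<close>
definition prune :: "tree \<Rightarrow> bool list \<Rightarrow> tree" where
  "prune t u = replace t (butlast u) (sub t (butlast u @ [\<not> last u]))"

text \<open>position in the pruned tree of a node v of t (v not in the subtree of u, v \<noteq> pa(u))\<close>
definition moved_pos :: "bool list \<Rightarrow> bool list \<Rightarrow> bool list" where
  "moved_pos u v = (if prefix (butlast u) v then butlast u @ drop (length u) v else v)"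

definition spr :: "tree \<Rightarrow> bool list \<Rightarrow> bool list \<Rightarrow> tree" where
  "spr t u v = (let t' = prune t u; v' = moved_pos u v
               in replace t' v' (Node (sub t' v') (sub t u)))"

definition valid_spr :: "tree \<Rightarrow> bool list \<Rightarrow> bool list \<Rightarrow> bool" where
  "valid_spr t u v \<longleftrightarrow> u \<in> positions t \<and> u \<noteq> [] \<and> v \<in> positions t \<and>
     v \<noteq> u \<and> v \<noteq> butlast u \<and> \<not> prefix u v"

end

theory Submission
  imports Defs
begin

fun mb :: "tree \<Rightarrow> nat" where
  "mb (Leaf c) = (if c then 1 else 0)"
| "mb (Node l r) = (if col (Node l r) = B then 1 else mb l + mb r)"

lemma mb_black: "col t = B \<Longrightarrow> mb t = 1"
  by (cases t) (auto split: if_splits)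

lemma nil_pos[simp]: "[] \<in> positions t"
  by (cases t) auto

lemma sub_Leaf[simp]: "sub (Leaf c) q = Leaf c"
  by (cases q) auto

lemma sub_append: "sub t (p @ q) = sub (sub t p) q"
  by (induction t arbitrary: p; case_tac p; auto)

lemma black_down: "col t = B \<Longrightarrow> col (sub t q) = B"
  by (induction t arbitrary: q; case_tac q; auto split: if_splits)

lemma nonB_up: "col (sub x (q @ r)) \<noteq> B \<Longrightarrow> col (sub x q) \<noteq> B"
  using black_down sub_append by metis

lemma pos_append: "p @ q \<in> positions t \<longleftrightarrow> p \<in> positions t \<and> q \<in> positions (sub t p)"
  by (induction t arbitrary: p; case_tac p; auto)

lemma finite_pos: "finite (positions t)"
  by (induction t) auto

lemma sub_replace_same: "p \<in> positions t \<Longrightarrow> sub (replace t p s) (p @ q) = sub s q"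
  by (induction t arbitrary: p; case_tac p; auto)

lemma pos_replace_same: "p \<in> positions t \<Longrightarrow> (p @ q \<in> positions (replace t p s)) \<longleftrightarrow> q \<in> positions s"
  by (induction t arbitrary: p; case_tac p; auto)

lemma sub_replace_prefix: "q \<in> positions t \<Longrightarrow> sub (replace t (q @ r) s) q = replace (sub t q) r s"
  by (induction t arbitrary: q; case_tac q; auto)

lemma replace_indep:
  "\<not> prefix p q \<Longrightarrow> \<not> prefix q p \<Longrightarrow> sub (replace t p s) q = sub t q \<and>
     (q \<in> positions (replace t p s) \<longleftrightarrow> q \<in> positions t)"
  by (induction t arbitrary: p q; case_tac p; case_tac q; auto)

lemma pos_replace_prefix: "q \<in> positions t \<Longrightarrow> prefix q p \<Longrightarrow> q \<in> positions (replace t p s)"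
  by (induction t arbitrary: p q; case_tac p; case_tac q; auto)

lemma col_replace_nonB: "col s \<noteq> B \<Longrightarrow> p \<in> positions t \<Longrightarrow> col (replace t p s) \<noteq> B"
  using sub_replace_same[of p t s "[]"] black_down by (metis append.right_neutral sub.simps(1))

lemma mb_replace:
  "p \<in> positions t \<Longrightarrow>
   (\<forall>q. strict_prefix q p \<longrightarrow> col (sub t q) \<noteq> B \<and> col (sub (replace t p s) q) \<noteq> B) \<Longrightarrow>
   mb (replace t p s) + mb (sub t p) = mb t + mb s"
proof (induction t arbitrary: p)
  case (Leaf c)
  then show ?case by auto
next
  case (Node l r)
  show ?case
  proof (cases p)
    case Nil
    then show ?thesis by simp
  next
    case (Cons d p')
    have c0: "col (Node l r) \<noteq> B" "col (replace (Node l r) p s) \<noteq> B"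
      using Node.prems(2)[rule_format, of "[]"] Cons by auto
    have hyp: "\<forall>q. strict_prefix q p' \<longrightarrow> col (sub (if d then r else l) q) \<noteq> B \<and>
       col (sub (replace (if d then r else l) p' s) q) \<noteq> B"
    proof (intro allI impI)
      fix q assume "strict_prefix q p'"
      then have "strict_prefix (d # q) p" using Cons by auto
      from Node.prems(2)[rule_format, OF this] show "col (sub (if d then r else l) q) \<noteq> B \<and>
       col (sub (replace (if d then r else l) p' s) q) \<noteq> B"
        using Cons by (cases d) auto
    qed
    show ?thesis
    proof (cases d)
      case True
      have pp: "p' \<in> positions r" using Node.prems(1) Cons True by auto
      have "mb (replace r p' s) + mb (sub r p') = mb r + mb s"
        using Node.IH(2)[OF pp] hyp True by auto
      then show ?thesis using c0 Cons True by auto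
    next
      case False
      have pp: "p' \<in> positions l" using Node.prems(1) Cons False by auto
      have "mb (replace l p' s) + mb (sub l p') = mb l + mb s"
        using Node.IH(1)[OF pp] hyp False by auto
      then show ?thesis using c0 Cons False by auto
    qed
  qed
qed

definition maxB :: "tree \<Rightarrow> bool list \<Rightarrow> bool" where
  "maxB t p \<longleftrightarrow> p \<in> positions t \<and> col (sub t p) = B \<and>
     (\<forall>p'. strict_prefix p' p \<longrightarrow> col (sub t p') \<noteq> B)"

lemma mono_B: "mono_subtree t B p \<longleftrightarrow> p \<in> positions t \<and> col (sub t p) = B"
  unfolding mono_subtree_def node_col_def
  by (metis append.right_neutral black_down sub_append)

lemma maximal_iff: "maximal_subtree t B p \<longleftrightarrow> maxB t p"
  unfolding maximal_subtree_def maxB_def mono_B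
  by (metis pos_append prefix_def strict_prefix_def)

lemma strict_prefix_Cons_iff:
  "strict_prefix p' (d # p) \<longleftrightarrow> p' = [] \<or> (\<exists>p''. p' = d # p'' \<and> strict_prefix p'' p)"
  by (cases p') auto

lemma maxB_Node:
  assumes "col (Node l r) \<noteq> B"
  shows "maxB (Node l r) (d # p) \<longleftrightarrow> maxB (if d then r else l) p"
  using assms unfolding maxB_def strict_prefix_Cons_iff by auto

lemma card_maxB: "card {p. maxB t p} = mb t"
proof (induction t)
  case (Leaf c)
  have "{p. maxB (Leaf c) p} = (if c then {[]} else {})"
    unfolding maxB_def by auto
  then show ?case by simp
next
  case (Node l r)
  show ?case
  proof (cases "col (Node l r) = B")
    case True
    have "{p. maxB (Node l r) p} = {[]}"
    proof -
      have "maxB (Node l r) []" using True unfolding maxB_def by auto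
      moreover have "p = []" if "maxB (Node l r) p" for p
        using that True unfolding maxB_def
        by (metis Nil_prefix prefix_order.dual_order.not_eq_order_implies_strict sub.simps(1))
      ultimately show ?thesis by auto
    qed
    then show ?thesis using True by simp
  next
    case False
    have nm: "\<not> maxB (Node l r) []" using False unfolding maxB_def by auto
    have eq: "{p. maxB (Node l r) p} = Cons False ` {p. maxB l p} \<union> Cons True ` {p. maxB r p}"
    proof (rule set_eqI)
      fix x show "x \<in> {p. maxB (Node l r) p} \<longleftrightarrow> x \<in> Cons False ` {p. maxB l p} \<union> Cons True ` {p. maxB r p}"
        using nm maxB_Node[OF False] by (cases x) auto
    qed
    have fl: "finite {p. maxB l p}" using finite_pos[of l]
      by (rule rev_finite_subset) (auto simp: maxB_def)
    have fr: "finite {p. maxB r p}" using finite_pos[of r]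
      by (rule rev_finite_subset) (auto simp: maxB_def)
    have "card (Cons False ` {p. maxB l p} \<union> Cons True ` {p. maxB r p}) =
          card (Cons False ` {p. maxB l p}) + card (Cons True ` {p. maxB r p})"
      by (rule card_Un_disjoint) (use fl fr in auto)
    also have "\<dots> = card {p. maxB l p} + card {p. maxB r p}"
      by (simp add: card_image)
    finally show ?thesis using eq Node.IH False by simp
  qed
qed

lemma num_mb: "num_max_black t = mb t"
  unfolding num_max_black_def maximal_iff by (rule card_maxB)

theorem lemma1:
  assumes "valid_spr t u v"
    and "node_col t u = B" and "classify t u = R"
    and "node_col t v = W \<or> node_col t v = G"
  shows "num_max_black t \<le> num_max_black (spr t u v)"
proof -
  define w where "w = butlast u"
  define d where "d = last u"
  have vs: "u \<in> positions t" "u \<noteq> []" "v \<in> positions t" "v \<noteq> u" "v \<noteq> w" "\<not> prefix u v"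
    using assms(1) unfolding valid_spr_def w_def by auto
  have u_eq: "u = w @ [d]" using vs(2) unfolding w_def d_def by simp
  define U where "U = sub t u"
  have colU: "col U = B" using assms(2) unfolding U_def node_col_def by simp
  define s where "s = sub t (w @ [\<not> d])"
  have wpos: "w \<in> positions t" and dpos: "[d] \<in> positions (sub t w)"
    using vs(1) pos_append[of w "[d]" t] u_eq by auto
  obtain a b where ab: "sub t w = Node a b"
    using dpos by (cases "sub t w") auto
  have maxu: "maximal_subtree t B u"
    using assms(2,3) unfolding classify_def by (auto split: if_splits)
  have colw: "col (sub t w) \<noteq> B"
  proof
    assume "col (sub t w) = B"
    then have "mono_subtree t B w" using wpos mono_B by auto
    moreover have "strict_prefix w u" using u_eq by (auto simp: strict_prefix_def)
    ultimately show False using maxu unfolding maximal_subtree_def by auto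
  qed
  have Us: "(U = a \<and> s = b) \<or> (U = b \<and> s = a)"
    unfolding U_def s_def u_eq sub_append ab by (cases d) auto
  have cols: "col s \<noteq> B" using Us colw colU ab by auto
  have mbw: "mb (sub t w) = mb s + 1"
    using Us colw colU ab mb_black[OF colU] by auto
  define t' where "t' = prune t u"
  have t'_def2: "t' = replace t w s" unfolding t'_def prune_def w_def s_def d_def by simp
  have "mb t' + mb (sub t w) = mb t + mb s"
    unfolding t'_def2
  proof (rule mb_replace[OF wpos], intro allI impI conjI)
    fix q assume "strict_prefix q w"
    then obtain r where r: "w = q @ r" by (auto simp: strict_prefix_def prefix_def)
    show "col (sub t q) \<noteq> B" using colw r nonB_up by metis
    have qpos: "q \<in> positions t" and rpos: "r \<in> positions (sub t q)"
      using wpos r pos_append by auto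
    show "col (sub (replace t w s) q) \<noteq> B"
      unfolding r sub_replace_prefix[OF qpos] using col_replace_nonB[OF cols rpos] .
  qed
  then have mbt': "mb t' + 1 = mb t" using mbw by simp
  define v' where "v' = moved_pos u v"
  have colv: "col (sub t v) \<noteq> B" using assms(4) unfolding node_col_def by auto
  have v'facts: "v' \<in> positions t' \<and> col (sub t' v') \<noteq> B"
  proof (cases "prefix w v")
    case True
    then obtain r where r: "v = w @ r" by (auto simp: prefix_def)
    have "r \<noteq> []" using r vs(5) by auto
    then obtain e r' where er: "r = e # r'" by (cases r) auto
    have "e \<noteq> d" using vs(6) r er u_eq by auto
    then have e: "e = (\<not> d)" by auto
    have v'eq: "v' = w @ r'" unfolding v'_def moved_pos_def w_def[symmetric]
      using True r er u_eq by simp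
    have "v = (w @ [\<not> d]) @ r'" using r er e by simp
    then have r'pos: "r' \<in> positions s" and subv: "sub s r' = sub t v"
      using vs(3) pos_append[of "w @ [\<not> d]" r' t] sub_append[of t "w @ [\<not> d]" r']
      unfolding s_def by auto
    show ?thesis unfolding v'eq t'_def2
      using pos_replace_same[OF wpos] sub_replace_same[OF wpos] r'pos subv colv by simp
  next
    case False
    have v'eq: "v' = v" unfolding v'_def moved_pos_def w_def[symmetric] using False by simp
    show ?thesis
    proof (cases "prefix v w")
      case True
      then obtain r where r: "w = v @ r" by (auto simp: prefix_def)
      have rpos: "r \<in> positions (sub t v)" using wpos r pos_append by auto
      show ?thesis unfolding v'eq t'_def2
        using pos_replace_prefix[OF vs(3) True] sub_replace_prefix[OF vs(3), of r s]
          col_replace_nonB[OF cols rpos] r by simp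
    next
      case False2: False
      show ?thesis unfolding v'eq t'_def2
        using replace_indep[OF False False2, of t s] vs(3) colv by simp
    qed
  qed
  define N where "N = Node (sub t' v') U"
  have colN: "col N \<noteq> B" using v'facts unfolding N_def by auto
  have mbN: "mb N = mb (sub t' v') + 1"
    using colN mb_black[OF colU] unfolding N_def by auto
  have spr_eq: "spr t u v = replace t' v' N"
    unfolding spr_def t'_def v'_def N_def U_def Let_def by simp
  have v'pos: "v' \<in> positions t'" using v'facts by simp
  have "mb (replace t' v' N) + mb (sub t' v') = mb t' + mb N"
  proof (rule mb_replace[OF v'pos], intro allI impI conjI)
    fix q assume "strict_prefix q v'"
    then obtain r where r: "v' = q @ r" by (auto simp: strict_prefix_def prefix_def)
    show "col (sub t' q) \<noteq> B" using v'facts r nonB_up by metis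
    have "sub (replace t' v' N) (q @ r) = N"
      using sub_replace_same[OF v'pos, of N "[]"] r by simp
    then show "col (sub (replace t' v' N) q) \<noteq> B" using colN nonB_up by metis
  qed
  then have "mb (spr t u v) = mb t" using spr_eq mbN mbt' by simp
  then show ?thesis unfolding num_mb by simp
qed

end
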